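(* Let $Q=(I,\Omega)$ be a quiver, $\alpha\in\mathbb{N}^I$, and let $F^*:0=F^0\subset F^1\subset\cdots\subset F^s=\bigoplus_{i\in I}\mathbb{C}^{\alpha_i}$ be a flag of $I$-graded subspaces. For $\underline{n}\in\mathbb{N}_{\geq 1}^{\Omega}$ and $r\geq 0$ let $S_r^{\underline{n}}\subseteq \mathrm{End}(\alpha)_{F^*}$ and $s_r^{\underline{n}}=\dim S_r^{\underline{n}}$ be as defined in the context. Then there exists $\underline{n_0}\in\mathbb{Z}^{\Omega}$ such that for all $\underline{n}\geq\underline{n_0}$ (componentwise), $$s_0^{\underline{n}}=\max_{r\geq 0}\bigl(s_r^{\underline{n}}-r\bigr).$$
   Context: Write $V_i=\mathbb{C}^{\alpha_i}$ and $F^k_i=F^k\cap V_i$. For $\underline{n}\in\mathbb{N}_{\geq1}^{\Omega}$, $Q_{\underline{n}}$ is the quiver with vertex set $I$ obtained from $Q$ by replacing each arrow $h:i\to j$ by $n_h$ identical arrows $i\to j$. A linear map $f:V_i\to V_j$ is compatible with $F^*$ if $f(F^k_i)\subseteq F^k_j$ for all $k$; $\mathrm{Hom}(V_i,V_j)_{F^*}$ denotes the space of such maps. $\mathrm{Rep}(Q_{\underline{n}},\alpha)_{F^*}$ is the vector space of representations $x=(x_a)$ of $Q_{\underline{n}}$ on $(V_i)_{i\in I}$ with every $x_a$ (for $a:i\to j$) in $\mathrm{Hom}(V_i,V_j)_{F^*}$. $\mathrm{End}(\alpha)_{F^*}$ is the space of tuples $g=(g_i)_{i\in I}$, $g_i\in\mathrm{End}(V_i)$,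 with $g_i(F^k_i)\subseteq F^k_i$ for all $i,k$. For $g\in\mathrm{End}(\alpha)_{F^*}$ let $W_{\underline{n}}(g)=\{x\in \mathrm{Rep}(Q_{\underline{n}},\alpha)_{F^*}: g_jx_a=x_ag_i \text{ for every arrow } a:i\to j\}$ (a linear subspace). Define $S_r^{\underline{n}}=\{g\in\mathrm{End}(\alpha)_{F^*}:\dim W_{\underline{n}}(g)\geq \dim \mathrm{Rep}(Q_{\underline{n}},\alpha)_{F^*}-r\}$ and $s_r^{\underline{n}}=\dim S_r^{\underline{n}}$. For $\underline{m},\underline{n}\in\mathbb{Z}^\Omega$, $\underline{n}\geq\underline{m}$ means $n_h\geq m_h$ for all $h\in\Omega$. *)

theory Defs
  imports "HOL-Analysis.Analysis" "HOL-Library.Function_Algebras"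
begin

(* Vectors of V_i = C^(alpha_i): functions nat => complex vanishing from index alpha_i on. *)
definition vecsp :: "nat \<Rightarrow> (nat \<Rightarrow> complex) set" where
  "vecsp d = {v. \<forall>a\<ge>d. v a = 0}"

definition csubspace_fun :: "(nat \<Rightarrow> complex) set \<Rightarrow> bool" where
  "csubspace_fun S \<longleftrightarrow> 0 \<in> S \<and> (\<forall>u\<in>S. \<forall>v\<in>S. u + v \<in> S)
     \<and> (\<forall>c::complex. \<forall>v\<in>S. (\<lambda>a. c * v a) \<in> S)"

(* A flag 0 = F^0 \<subseteq> F^1 \<subseteq> ... \<subseteq> F^s = \<oplus>_i V_i of I-graded subspaces,
   given by its graded pieces F k i = F^k \<inter> V_i. *)
definition graded_flag ::
  "'v set \<Rightarrow> ('v \<Rightarrow> nat) \<Rightarrow> nat \<Rightarrow> (nat \<Rightarrow> 'v \<Rightarrow> (nat \<Rightarrow> complex) set) \<Rightarrow> bool" where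
  "graded_flag I \<alpha> s F \<longleftrightarrow>
     (\<forall>k\<le>s. \<forall>i\<in>I. csubspace_fun (F k i) \<and> F k i \<subseteq> vecsp (\<alpha> i))
   \<and> (\<forall>i\<in>I. F 0 i = {0} \<and> F s i = vecsp (\<alpha> i))
   \<and> (\<forall>k<s. \<forall>i\<in>I. F k i \<subseteq> F (Suc k) i)"

definition mat_app :: "nat \<Rightarrow> (nat \<Rightarrow> nat \<Rightarrow> complex) \<Rightarrow> (nat \<Rightarrow> complex) \<Rightarrow> (nat \<Rightarrow> complex)" where
  "mat_app d M v = (\<lambda>a. \<Sum>b<d. M a b * v b)"

definition compat ::
  "('v \<Rightarrow> nat) \<Rightarrow> nat \<Rightarrow> (nat \<Rightarrow> 'v \<Rightarrow> (nat \<Rightarrow> complex) set) \<Rightarrow> 'v \<Rightarrow> 'v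
     \<Rightarrow> (nat \<Rightarrow> nat \<Rightarrow> complex) \<Rightarrow> bool" where
  "compat \<alpha> s F i j M \<longleftrightarrow> (\<forall>k\<le>s. \<forall>v\<in>F k i. mat_app (\<alpha> i) M v \<in> F k j)"

(* Rep(Q_n, alpha)_{F^*}: x (h,c,a,b) is the (a,b) entry of the c-th copy (c < n h) of arrow h *)
definition RepF ::
  "'e set \<Rightarrow> ('e \<Rightarrow> 'v) \<Rightarrow> ('e \<Rightarrow> 'v) \<Rightarrow> ('v \<Rightarrow> nat) \<Rightarrow> nat
     \<Rightarrow> (nat \<Rightarrow> 'v \<Rightarrow> (nat \<Rightarrow> complex) set) \<Rightarrow> ('e \<Rightarrow> nat)
     \<Rightarrow> ('e \<times> nat \<times> nat \<times> nat \<Rightarrow> complex) set" where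
  "RepF \<Omega> src tgt \<alpha> s F n =
     {x. (\<forall>h c a b. x (h, c, a, b) \<noteq> 0 \<longrightarrow>
             h \<in> \<Omega> \<and> c < n h \<and> a < \<alpha> (tgt h) \<and> b < \<alpha> (src h))
       \<and> (\<forall>h\<in>\<Omega>. \<forall>c<n h. compat \<alpha> s F (src h) (tgt h) (\<lambda>a b. x (h, c, a, b)))}"

definition EndCoords :: "'v set \<Rightarrow> ('v \<Rightarrow> nat) \<Rightarrow> ('v \<times> nat \<times> nat) set" where
  "EndCoords I \<alpha> = {(i, a, b). i \<in> I \<and> a < \<alpha> i \<and> b < \<alpha> i}"

(* End(alpha)_{F^*}: g (i,a,b) is the (a,b) entry of g_i *)
definition EndF ::
  "'v set \<Rightarrow> ('v \<Rightarrow> nat) \<Rightarrow> nat \<Rightarrow> (nat \<Rightarrow> 'v \<Rightarrow> (nat \<Rightarrow> complex) set)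
     \<Rightarrow> ('v \<times> nat \<times> nat \<Rightarrow> complex) set" where
  "EndF I \<alpha> s F =
     {g. (\<forall>p. g p \<noteq> 0 \<longrightarrow> p \<in> EndCoords I \<alpha>)
       \<and> (\<forall>i\<in>I. compat \<alpha> s F i i (\<lambda>a b. g (i, a, b)))}"

definition Wn ::
  "'e set \<Rightarrow> ('e \<Rightarrow> 'v) \<Rightarrow> ('e \<Rightarrow> 'v) \<Rightarrow> ('v \<Rightarrow> nat) \<Rightarrow> nat
     \<Rightarrow> (nat \<Rightarrow> 'v \<Rightarrow> (nat \<Rightarrow> complex) set) \<Rightarrow> ('e \<Rightarrow> nat)
     \<Rightarrow> ('v \<times> nat \<times> nat \<Rightarrow> complex) \<Rightarrow> ('e \<times> nat \<times> nat \<times> nat \<Rightarrow> complex) set" where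
  "Wn \<Omega> src tgt \<alpha> s F n g =
     {x \<in> RepF \<Omega> src tgt \<alpha> s F n.
        \<forall>h\<in>\<Omega>. \<forall>c<n h. \<forall>a b.
          (\<Sum>t<\<alpha> (tgt h). g (tgt h, a, t) * x (h, c, t, b))
            = (\<Sum>t<\<alpha> (src h). x (h, c, a, t) * g (src h, t, b))}"

definition cdim :: "('a \<Rightarrow> complex) set \<Rightarrow> nat" where
  "cdim W = vector_space.dim (\<lambda>(c::complex) (x::'a \<Rightarrow> complex). (\<lambda>p. c * x p)) W"

(* Dimension of an algebraic subset X of the affine space C^K (K a finite coordinate set):
   the largest |J|, J \<subseteq> K, such that the coordinate projection of X to C^J contains a
   nonempty (Euclidean) open subset of C^J.  C^J is identified with the functions vanishing
   off J, carrying the subspace topology of the product topology. *)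
definition proj_has_interior :: "'a set \<Rightarrow> ('a \<Rightarrow> complex) set \<Rightarrow> bool" where
  "proj_has_interior J X \<longleftrightarrow>
     (\<exists>U. open U \<and> (\<exists>f\<in>U. \<forall>p. p \<notin> J \<longrightarrow> f p = 0)
        \<and> (\<forall>f\<in>U. (\<forall>p. p \<notin> J \<longrightarrow> f p = 0) \<longrightarrow> (\<exists>y\<in>X. \<forall>p\<in>J. y p = f p)))"

definition alg_dim :: "'a set \<Rightarrow> ('a \<Rightarrow> complex) set \<Rightarrow> nat" where
  "alg_dim K X = Max {card J | J. J \<subseteq> K \<and> proj_has_interior J X}"

definition Sr ::
  "'v set \<Rightarrow> 'e set \<Rightarrow> ('e \<Rightarrow> 'v) \<Rightarrow> ('e \<Rightarrow> 'v) \<Rightarrow> ('v \<Rightarrow> nat) \<Rightarrow> nat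
     \<Rightarrow> (nat \<Rightarrow> 'v \<Rightarrow> (nat \<Rightarrow> complex) set) \<Rightarrow> ('e \<Rightarrow> nat) \<Rightarrow> nat
     \<Rightarrow> ('v \<times> nat \<times> nat \<Rightarrow> complex) set" where
  "Sr I \<Omega> src tgt \<alpha> s F n r =
     {g \<in> EndF I \<alpha> s F.
        int (cdim (Wn \<Omega> src tgt \<alpha> s F n g)) \<ge> int (cdim (RepF \<Omega> src tgt \<alpha> s F n)) - int r}"

definition sr ::
  "'v set \<Rightarrow> 'e set \<Rightarrow> ('e \<Rightarrow> 'v) \<Rightarrow> ('e \<Rightarrow> 'v) \<Rightarrow> ('v \<Rightarrow> nat) \<Rightarrow> nat
     \<Rightarrow> (nat \<Rightarrow> 'v \<Rightarrow> (nat \<Rightarrow> complex) set) \<Rightarrow> ('e \<Rightarrow> nat) \<Rightarrow> nat \<Rightarrow> nat" where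
  "sr I \<Omega> src tgt \<alpha> s F n r = alg_dim (EndCoords I \<alpha>) (Sr I \<Omega> src tgt \<alpha> s F n r)"

end

theory Submission
  imports Defs
begin

abbreviation csc :: "complex \<Rightarrow> ('a \<Rightarrow> complex) \<Rightarrow> ('a \<Rightarrow> complex)" where
  "csc \<equiv> (\<lambda>c x p. c * x p)"

lemma vs_csc: "vector_space (csc :: complex \<Rightarrow> ('a \<Rightarrow> complex) \<Rightarrow> _)"
  by unfold_locales (auto simp: fun_eq_iff algebra_simps)

interpretation fv: vector_space "csc :: complex \<Rightarrow> ('a \<Rightarrow> complex) \<Rightarrow> _"
  by (rule vs_csc)

lemma sum_fun_apply: "(sum f A) x = sum (\<lambda>a. f a x) A"
  by (induction A rule: infinite_finite_induct) auto

lemma fin_supp_span: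
  fixes P :: "'a set"
  assumes "finite P" "\<forall>p. z p \<noteq> 0 \<longrightarrow> p \<in> P"
  shows "z \<in> fv.span ((\<lambda>q p. if p = q then 1 else 0) ` P)"
proof -
  have "z = (\<Sum>q\<in>P. csc (z q) (\<lambda>p. if p = q then 1 else 0))"
  proof
    fix x
    show "z x = (\<Sum>q\<in>P. csc (z q) (\<lambda>p. if p = q then 1 else (0::complex))) x"
      unfolding sum_fun_apply using assms
      by (cases "x \<in> P") (auto simp: if_distrib cong: if_cong)
  qed
  also have "\<dots> \<in> fv.span ((\<lambda>q p. if p = q then 1 else 0) ` P)"
    by (intro fv.span_sum fv.span_scale fv.span_base) auto
  finally show ?thesis .
qed

lemma dim_gap:
  fixes W R :: "('a \<Rightarrow> complex) set" and P :: "'a set"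
  assumes finP: "finite P" and RP: "\<forall>z\<in>R. \<forall>p. z p \<noteq> 0 \<longrightarrow> p \<in> P"
    and WR: "W \<subseteq> R"
    and Qsub: "\<And>m. m < N \<Longrightarrow> fv.subspace (Q m)"
    and WQ: "\<And>m. m < N \<Longrightarrow> W \<subseteq> Q m"
    and YR: "\<And>c. c < N \<Longrightarrow> Y c \<in> R"
    and YQ: "\<And>c m. c < N \<Longrightarrow> m < N \<Longrightarrow> c \<noteq> m \<Longrightarrow> Y c \<in> Q m"
    and YnQ: "\<And>m. m < N \<Longrightarrow> Y m \<notin> Q m"
  shows "cdim W + N \<le> cdim R"
proof -
  define T where "T = (\<lambda>q p. if p = q then 1 else (0::complex)) ` P"
  have finT: "finite T" using finP by (simp add: T_def)
  have RT: "R \<subseteq> fv.span T" using fin_supp_span[OF finP] RP unfolding T_def by blast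
  obtain B where B: "B \<subseteq> W" "fv.independent B" "W \<subseteq> fv.span B" "card B = fv.dim W"
    by (rule fv.basis_exists)
  obtain B' where B': "B' \<subseteq> R" "fv.independent B'" "R \<subseteq> fv.span B'" "card B' = fv.dim R"
    by (rule fv.basis_exists)
  have finB: "finite B" using fv.independent_span_bound[OF finT B(2)] B(1) WR RT by blast
  have finB': "finite B'" using fv.independent_span_bound[OF finT B'(2)] B'(1) RT by blast
  have "m \<le> N \<Longrightarrow> fv.independent (B \<union> Y ` {..<m}) \<and> card (B \<union> Y ` {..<m}) = card B + m" for m
  proof (induction m)
    case 0
    then show ?case using B by simp
  next
    case (Suc m)
    define S where "S = B \<union> Y ` {..<m}"
    have mN: "m < N" using Suc by simp
    have "S \<subseteq> Q m" unfolding S_def using B(1) WQ[OF mN] YQ mN by auto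
    then have "fv.span S \<subseteq> Q m" using fv.span_minimal Qsub[OF mN] by blast
    then have nin: "Y m \<notin> fv.span S" using YnQ[OF mN] by blast
    then have nin2: "Y m \<notin> S" using fv.span_base by blast
    have eq: "B \<union> Y ` {..<Suc m} = insert (Y m) S" unfolding S_def lessThan_Suc by auto
    have "finite S" unfolding S_def using finB by simp
    then show ?case using Suc mN nin nin2 fv.independent_insertI[OF nin] unfolding eq
      by (simp add: S_def)
  qed
  then have I: "fv.independent (B \<union> Y ` {..<N})" "card (B \<union> Y ` {..<N}) = card B + N" by auto
  have "B \<union> Y ` {..<N} \<subseteq> fv.span B'" using B(1) WR YR B'(3) by auto
  from fv.independent_span_bound[OF finB' I(1) this] I(2) B(4) B'(4)
  show ?thesis unfolding cdim_def by simp
qed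


lemma alg_dim_le:
  assumes "finite K" "X \<noteq> {}"
  shows "alg_dim K X \<le> card K"
proof -
  have fin: "finite {card J | J. J \<subseteq> K \<and> proj_has_interior J X}"
    using assms(1) by (rule finite_subset[rotated, OF finite_imageI[OF finite_Pow_iff[THEN iffD2]]]) auto
  have "proj_has_interior {} X" unfolding proj_has_interior_def
    using assms(2) by (intro exI[of _ UNIV]) auto
  then have ne: "{card J | J. J \<subseteq> K \<and> proj_has_interior J X} \<noteq> {}" by blast
  show ?thesis unfolding alg_dim_def using fin ne assms(1)
    by (auto simp: Max_le_iff intro: card_mono)
qed

lemma zero_compat:
  assumes "graded_flag I \<alpha> s F" "j \<in> I"
  shows "compat \<alpha> s F i j (\<lambda>a b. 0)"
  using assms unfolding compat_def graded_flag_def csubspace_fun_def mat_app_def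
  by (auto simp: zero_fun_def[symmetric])

lemma zero_in_Sr:
  assumes "graded_flag I \<alpha> s F"
  shows "0 \<in> Sr I \<Omega> src tgt \<alpha> s F n r"
proof -
  have "0 \<in> EndF I \<alpha> s F" unfolding EndF_def using zero_compat[OF assms] by auto
  moreover have "Wn \<Omega> src tgt \<alpha> s F n 0 = RepF \<Omega> src tgt \<alpha> s F n"
    unfolding Wn_def by auto
  ultimately show ?thesis unfolding Sr_def by auto
qed

lemma key_gap:
  assumes fl: "graded_flag I \<alpha> s F" and fO: "finite \<Omega>"
    and st: "\<forall>h\<in>\<Omega>. src h \<in> I \<and> tgt h \<in> I"
    and ne: "Wn \<Omega> src tgt \<alpha> s F n g \<noteq> RepF \<Omega> src tgt \<alpha> s F n"
    and nD: "\<forall>h\<in>\<Omega>. D \<le> n h"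
  shows "cdim (Wn (\<Omega>::'e set) src tgt \<alpha> s F n g) + D \<le> cdim (RepF \<Omega> src tgt \<alpha> s F n)"
proof -
  let ?R = "RepF \<Omega> src tgt \<alpha> s F n" and ?W = "Wn \<Omega> src tgt \<alpha> s F n g"
  have WR: "?W \<subseteq> ?R" unfolding Wn_def by auto
  then obtain x where x: "x \<in> ?R" "x \<notin> ?W" using ne by blast
  then obtain h c0 a0 b0 where h: "h \<in> \<Omega>" "c0 < n h" and
    fail: "(\<Sum>t<\<alpha> (tgt h). g (tgt h, a0, t) * x (h, c0, t, b0))
            \<noteq> (\<Sum>t<\<alpha> (src h). x (h, c0, a0, t) * g (src h, t, b0))"
    unfolding Wn_def by auto
  define P where "P = Sigma \<Omega> (\<lambda>h. {..<n h} \<times> {..<\<alpha> (tgt h)} \<times> {..<\<alpha> (src h)})"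
  have finP: "finite P" unfolding P_def using fO by auto
  have RP: "\<forall>z\<in>?R. \<forall>p. z p \<noteq> 0 \<longrightarrow> p \<in> P"
    unfolding RepF_def P_def by auto
  define Y where "Y = (\<lambda>c::nat. (\<lambda>(h', c', a, b). if h' = h \<and> c' = c then x (h, c0, a, b) else (0::complex)))"
  define Q where "Q = (\<lambda>m::nat. {z. \<forall>a b. (\<Sum>t<\<alpha> (tgt h). g (tgt h, a, t) * z (h, m, t, b))
            = (\<Sum>t<\<alpha> (src h). z (h, m, a, t) * g (src h, t, b))})"
  have "cdim ?W + n h \<le> cdim ?R"
  proof (rule dim_gap[OF finP RP WR])
    fix m assume "m < n h"
    have sc: "(\<Sum>t<A. u t * (c * z t)) = c * (\<Sum>t<A. u t * z t)"
      "(\<Sum>t<A. (c * z t) * u t) = c * (\<Sum>t<A. z t * u t)"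
      for A and c :: complex and u z :: "nat \<Rightarrow> complex"
      by (simp_all add: sum_distrib_left algebra_simps)
    show "fv.subspace (Q m)" unfolding fv.subspace_def Q_def
    proof (intro conjI ballI allI; (elim CollectE)?; intro CollectI allI)
      fix a b show "(\<Sum>t<\<alpha> (tgt h). g (tgt h, a, t) * (0::'e \<times> nat \<times> nat \<times> nat \<Rightarrow> complex) (h, m, t, b))
            = (\<Sum>t<\<alpha> (src h). (0::'e \<times> nat \<times> nat \<times> nat \<Rightarrow> complex) (h, m, a, t) * g (src h, t, b))" by simp
    next
      fix x y :: "'e \<times> nat \<times> nat \<times> nat \<Rightarrow> complex" and a b
      assume "\<forall>a b. (\<Sum>t<\<alpha> (tgt h). g (tgt h, a, t) * x (h, m, t, b)) = (\<Sum>t<\<alpha> (src h). x (h, m, a, t) * g (src h, t, b))"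
        "\<forall>a b. (\<Sum>t<\<alpha> (tgt h). g (tgt h, a, t) * y (h, m, t, b)) = (\<Sum>t<\<alpha> (src h). y (h, m, a, t) * g (src h, t, b))"
      then show "(\<Sum>t<\<alpha> (tgt h). g (tgt h, a, t) * (x + y) (h, m, t, b)) = (\<Sum>t<\<alpha> (src h). (x + y) (h, m, a, t) * g (src h, t, b))"
        by (simp add: distrib_left distrib_right sum.distrib)
    next
      fix c :: complex and x :: "'e \<times> nat \<times> nat \<times> nat \<Rightarrow> complex" and a b
      assume "\<forall>a b. (\<Sum>t<\<alpha> (tgt h). g (tgt h, a, t) * x (h, m, t, b)) = (\<Sum>t<\<alpha> (src h). x (h, m, a, t) * g (src h, t, b))"
      then show "(\<Sum>t<\<alpha> (tgt h). g (tgt h, a, t) * (\<lambda>p. c * x p) (h, m, t, b)) = (\<Sum>t<\<alpha> (src h). (\<lambda>p. c * x p) (h, m, a, t) * g (src h, t, b))"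
        by (simp only: sc)
    qed
  next
    fix m assume "m < n h"
    then show "?W \<subseteq> Q m" unfolding Q_def Wn_def using h by auto
  next
    fix c assume c: "c < n h"
    have xs: "x (h', c', a, b) \<noteq> 0 \<Longrightarrow> h' \<in> \<Omega> \<and> c' < n h' \<and> a < \<alpha> (tgt h') \<and> b < \<alpha> (src h')"
      for h' c' a b using x(1) unfolding RepF_def by blast
    have xc: "compat \<alpha> s F (src h) (tgt h) (\<lambda>a b. x (h, c0, a, b))"
      using x(1) h unfolding RepF_def by blast
    show "Y c \<in> ?R" unfolding RepF_def
    proof (rule CollectI, rule conjI; intro allI impI ballI)
      fix h' c' a b assume "Y c (h', c', a, b) \<noteq> 0"
      then show "h' \<in> \<Omega> \<and> c' < n h' \<and> a < \<alpha> (tgt h') \<and> b < \<alpha> (src h')"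
        using xs[of h c0 a b] c h unfolding Y_def by (auto split: if_splits)
    next
      fix h' c' assume "h' \<in> \<Omega>" "c' < n h'"
      show "compat \<alpha> s F (src h') (tgt h') (\<lambda>a b. Y c (h', c', a, b))"
      proof (cases "h' = h \<and> c' = c")
        case True then show ?thesis using xc unfolding Y_def by simp
      next
        case False
        then have "(\<lambda>a b. Y c (h', c', a, b)) = (\<lambda>a b. 0)" unfolding Y_def by auto
        then show ?thesis using zero_compat[OF fl] st \<open>h' \<in> \<Omega>\<close> by simp
      qed
    qed
  next
    fix c m assume "c < n h" "m < n h" "c \<noteq> m"
    then show "Y c \<in> Q m" unfolding Y_def Q_def by auto
  next
    fix m assume "m < n h"
    then show "Y m \<notin> Q m" unfolding Y_def Q_def using fail by auto
  qed
  then show ?thesis using nD h by (meson add_le_cancel_left le_trans)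
qed

theorem lemma4p3:
  fixes I :: "'v set" and \<Omega> :: "'e set" and src tgt :: "'e \<Rightarrow> 'v"
    and \<alpha> :: "'v \<Rightarrow> nat" and s :: nat
    and F :: "nat \<Rightarrow> 'v \<Rightarrow> (nat \<Rightarrow> complex) set"
  assumes "finite I" and "finite \<Omega>"
    and "\<forall>h\<in>\<Omega>. src h \<in> I \<and> tgt h \<in> I"
    and "graded_flag I \<alpha> s F"
  shows "\<exists>n0 :: 'e \<Rightarrow> int. \<forall>n :: 'e \<Rightarrow> nat.
           (\<forall>h\<in>\<Omega>. 1 \<le> n h) \<and> (\<forall>h\<in>\<Omega>. n0 h \<le> int (n h)) \<longrightarrow>
           int (sr I \<Omega> src tgt \<alpha> s F n 0)
             = (SUP r::nat. int (sr I \<Omega> src tgt \<alpha> s F n r) - int r)"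
proof -
  define K where "K = EndCoords I \<alpha>"
  define D where "D = card K"
  have finK: "finite K"
  proof -
    have "K = Sigma I (\<lambda>i. {..<\<alpha> i} \<times> {..<\<alpha> i})" unfolding K_def EndCoords_def by auto
    then show ?thesis using assms(1) by auto
  qed
  show ?thesis
  proof (intro exI[of _ "\<lambda>_. int D"] allI impI)
    fix n :: "'e \<Rightarrow> nat"
    assume "(\<forall>h\<in>\<Omega>. 1 \<le> n h) \<and> (\<forall>h\<in>\<Omega>. int D \<le> int (n h))"
    then have nD: "\<forall>h\<in>\<Omega>. D \<le> n h" by auto
    let ?f = "\<lambda>r. int (sr I \<Omega> src tgt \<alpha> s F n r) - int r"
    have bnd: "sr I \<Omega> src tgt \<alpha> s F n r \<le> D" for r
    proof -
      have "Sr I \<Omega> src tgt \<alpha> s F n r \<noteq> {}" using zero_in_Sr[OF assms(4)] by blast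
      from alg_dim_le[OF finK this] show ?thesis unfolding sr_def D_def K_def .
    qed
    have eqS: "Sr I \<Omega> src tgt \<alpha> s F n r = Sr I \<Omega> src tgt \<alpha> s F n 0" if "r < D" for r
    proof
      show "Sr I \<Omega> src tgt \<alpha> s F n 0 \<subseteq> Sr I \<Omega> src tgt \<alpha> s F n r"
        unfolding Sr_def by auto
    next
      show "Sr I \<Omega> src tgt \<alpha> s F n r \<subseteq> Sr I \<Omega> src tgt \<alpha> s F n 0"
      proof
        fix g assume g: "g \<in> Sr I \<Omega> src tgt \<alpha> s F n r"
        have "Wn \<Omega> src tgt \<alpha> s F n g = RepF \<Omega> src tgt \<alpha> s F n"
        proof (rule ccontr)
          assume "Wn \<Omega> src tgt \<alpha> s F n g \<noteq> RepF \<Omega> src tgt \<alpha> s F n"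
          from key_gap[OF assms(4) assms(2) assms(3) this nD]
          have "cdim (Wn \<Omega> src tgt \<alpha> s F n g) + D \<le> cdim (RepF \<Omega> src tgt \<alpha> s F n)" .
          moreover have "int (cdim (Wn \<Omega> src tgt \<alpha> s F n g)) \<ge> int (cdim (RepF \<Omega> src tgt \<alpha> s F n)) - int r"
            using g unfolding Sr_def by blast
          ultimately show False using that by linarith
        qed
        then show "g \<in> Sr I \<Omega> src tgt \<alpha> s F n 0" using g unfolding Sr_def by simp
      qed
    qed
    have le: "?f r \<le> ?f 0" for r
    proof (cases "r < D")
      case True then show ?thesis using eqS[OF True] unfolding sr_def by simp
    next
      case False then show ?thesis using bnd[of r] by simp
    qed
    have "Sup (range ?f) = ?f 0"
      proof (rule cSup_eq_maximum)
      show "?f 0 \<in> range ?f" by (rule rangeI)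
    qed (use le in auto)
    then show "int (sr I \<Omega> src tgt \<alpha> s F n 0) = (SUP r::nat. ?f r)" by simp
  qed
qed

end
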